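(* For every $f=\sum_{n\ge0}f_n\mathtt{x}^n\in\mathbb{K}[[\mathtt{x}]]$ and every $\sigma_{+}\in\mathfrak{M}^{+}$, the series $\sum_{n\ge0}f_n\sigma_{+}^{\circ n}$ converges in $\mathfrak{M}$.
   Context: $\mathbb{K}$ is a field of characteristic zero (discrete topology); $\mathbb{K}[[\mathtt{x}]]$ has the $(\mathtt{x})$-adic topology, given by the order valuation $\nu$ ($\nu(0)=+\infty$). $\mathfrak{M}:=\mathtt{x}\mathbb{K}[[\mathtt{x}]]$ (subspace topology) and $\mathfrak{M}^{+}:=\{\sigma\in\mathfrak{M}:\nu(\sigma)>1\}=\mathtt{x}^2\mathbb{K}[[\mathtt{x}]]$. For $g=\sum g_n\mathtt{x}^n$ and $\sigma\in\mathfrak{M}$, $g\circ\sigma:=\sum g_n\sigma^n$; $\sigma^{\circ0}:=\mathtt{x}$, $\sigma^{\circ n}:=\sigma\circ\cdots\circ\sigma$ ($n$ factors). *)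

theory Defs
  imports "HOL-Computational_Algebra.Formal_Power_Series"
begin

definition fpsM :: "'a::comm_ring_1 fps set" where
  "fpsM = {s. fps_nth s 0 = 0}"

definition fpsMplus :: "'a::comm_ring_1 fps set" where
  "fpsMplus = {s. fps_nth s 0 = 0 \<and> fps_nth s 1 = 0}"

definition fps_iter :: "'a::comm_ring_1 fps \<Rightarrow> nat \<Rightarrow> 'a fps" where
  "fps_iter \<sigma> n = ((\<lambda>g. fps_compose \<sigma> g) ^^ n) fps_X"

end

theory Submission
  imports Defs
begin

unbundle fps_syntax

lemma pow_low_zero:
  fixes g :: "'a::comm_ring_1 fps"
  assumes "\<And>k. k < m \<Longrightarrow> g $ k = 0"
  shows "k < i * m \<Longrightarrow> (g ^ i) $ k = 0"
proof (induction i arbitrary: k)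
  case 0 then show ?case by simp
next
  case (Suc i)
  have "(g * g ^ i) $ k = (\<Sum>j=0..k. g$j * (g^i)$(k - j))" by (rule fps_mult_nth)
  also have "\<dots> = 0"
  proof (rule sum.neutral, intro ballI)
    fix j assume "j \<in> {0..k}"
    show "g$j * (g^i)$(k - j) = 0"
    proof (cases "j < m")
      case True then show ?thesis using assms by simp
    next
      case False
      have "k < m + i * m" using Suc.prems by simp
      moreover have "j \<le> k" using \<open>j \<in> {0..k}\<close> by simp
      ultimately have "k - j < i * m" using False by linarith
      then show ?thesis using Suc.IH by simp
    qed
  qed
  finally show ?case by simp
qed

lemma iter_low_zero:
  fixes \<sigma> :: "'a::comm_ring_1 fps"
  assumes "\<sigma> \<in> fpsMplus"
  shows "k \<le> n \<Longrightarrow> fps_iter \<sigma> n $ k = 0"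
proof (induction n arbitrary: k)
  case 0 then show ?case by (simp add: fps_iter_def)
next
  case (Suc n)
  have s0: "\<sigma>$0 = 0" and s1: "\<sigma>$1 = 0" using assms by (auto simp: fpsMplus_def)
  have it: "fps_iter \<sigma> (Suc n) = \<sigma> oo fps_iter \<sigma> n" by (simp add: fps_iter_def)
  have low: "\<And>k. k < Suc n \<Longrightarrow> fps_iter \<sigma> n $ k = 0" using Suc.IH by simp
  have "(\<sigma> oo fps_iter \<sigma> n) $ k = (\<Sum>i=0..k. \<sigma>$i * ((fps_iter \<sigma> n)^i $ k))"
    by (rule fps_compose_nth)
  also have "\<dots> = 0"
  proof (rule sum.neutral, intro ballI)
    fix i assume "i \<in> {0..k}"
    show "\<sigma>$i * ((fps_iter \<sigma> n)^i $ k) = 0"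
    proof (cases "i < 2")
      case True then have "i = 0 \<or> i = 1" by auto
      then show ?thesis using s0 s1 by auto
    next
      case False
      then have "2 * Suc n \<le> i * Suc n" by (intro mult_le_mono1) simp
      then have "k < i * Suc n" using Suc.prems by simp
      then show ?thesis using pow_low_zero[OF low] by simp
    qed
  qed
  finally show ?case using it by simp
qed

theorem mainTheorem8:
  fixes f \<sigma> :: "'a::field_char_0 fps"
  assumes "\<sigma> \<in> fpsMplus"
  shows "\<exists>L \<in> fpsM. (\<lambda>n. fps_const (fps_nth f n) * fps_iter \<sigma> n) sums L"
proof -
  define L where "L = Abs_fps (\<lambda>k. \<Sum>i<k. f$i * fps_iter \<sigma> i $ k)"
  have "L \<in> fpsM" by (simp add: L_def fpsM_def)
  moreover have "(\<lambda>n. fps_const (fps_nth f n) * fps_iter \<sigma> n) sums L"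
    unfolding sums_def
  proof (rule tendsto_fpsI)
    fix k
    show "\<forall>\<^sub>F n in sequentially. (\<Sum>i<n. fps_const (f $ i) * fps_iter \<sigma> i) $ k = L $ k"
      unfolding eventually_sequentially
    proof (intro exI allI impI)
      fix n assume "k \<le> n"
      have "(\<Sum>i<n. fps_const (f $ i) * fps_iter \<sigma> i) $ k = (\<Sum>i<n. f$i * fps_iter \<sigma> i $ k)"
        by (simp add: fps_sum_nth)
      also have "\<dots> = (\<Sum>i<k. f$i * fps_iter \<sigma> i $ k)"
        using \<open>k \<le> n\<close> iter_low_zero[OF assms]
        by (intro sum.mono_neutral_right) auto
      finally show "(\<Sum>i<n. fps_const (f $ i) * fps_iter \<sigma> i) $ k = L $ k"
        by (simp add: L_def)
    qed
  qed
  ultimately show ?thesis by blast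
qed

end
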